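(* Let $m\geq 1$ be an integer. For all integers $n\geq 1$ and all real $x\in(0,\pi)$, $$\sum_{k=0}^n \binom{n-k+m}{m}\cos(kx)>m.$$ Moreover, the lower bound $m$ is sharp, i.e. it cannot be replaced by any larger constant (valid for all $n\ge1$, $x\in(0,\pi)$). *)

theory Defs
  imports "HOL-Analysis.Analysis"
begin

end

theory Submission
  imports Defs
begin

definition SS :: "nat \<Rightarrow> nat \<Rightarrow> real \<Rightarrow> real" where
  "SS m n x = (\<Sum>k=0..n. real ((n - k + m) choose m) * cos (real k * x))"

lemma SS_0: "SS m 0 x = 1"
  by (simp add: SS_def)

lemma SS_rec: "SS (Suc m) (Suc n) x = SS (Suc m) n x + SS m (Suc n) x"
proof -
  have "SS (Suc m) (Suc n) x = (\<Sum>k=0..n. real ((Suc n - k + Suc m) choose Suc m) * cos (real k * x)) + cos (real (Suc n) * x)"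
    by (simp add: SS_def)
  also have "(\<Sum>k=0..n. real ((Suc n - k + Suc m) choose Suc m) * cos (real k * x))
     = (\<Sum>k=0..n. real ((n - k + Suc m) choose Suc m) * cos (real k * x) + real ((Suc n - k + m) choose m) * cos (real k * x))"
  proof (rule sum.cong)
    fix k assume "k \<in> {0..n}"
    then have kn: "k \<le> n" by simp
    have "Suc n - k + Suc m = Suc (n - k + Suc m)" using kn by simp
    moreover have "Suc n - k + m = n - k + Suc m" using kn by simp
    ultimately show "real ((Suc n - k + Suc m) choose Suc m) * cos (real k * x)
       = real ((n - k + Suc m) choose Suc m) * cos (real k * x) + real ((Suc n - k + m) choose m) * cos (real k * x)"
      by (simp add: binomial_Suc_Suc algebra_simps)
  qed simp
  also have "\<dots> = SS (Suc m) n x + (\<Sum>k=0..n. real ((Suc n - k + m) choose m) * cos (real k * x))"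
    by (simp add: sum.distrib SS_def)
  finally show ?thesis by (simp add: SS_def)
qed

lemma rev_sum: "(\<Sum>j=0..n. cos ((real (Suc n) - real j) * x)) = (\<Sum>k=0..n. cos (real (Suc k) * x))"
proof -
  have "(\<Sum>j=0..n. cos ((real (Suc n) - real j) * x)) = (\<Sum>j=0..n. cos (real (Suc (n - j)) * x))"
    by (rule sum.cong) (auto simp: of_nat_diff algebra_simps)
  also have "\<dots> = (\<Sum>k=0..n. cos (real (Suc k) * x))"
    using sum.atLeastAtMost_rev[of "\<lambda>k. cos (real (Suc k) * x)" 0 n] by simp
  finally show ?thesis .
qed

lemma key: "2 * SS 1 n x - real (Suc n) =
   (\<Sum>j=0..n. cos (real j * x))^2 + (\<Sum>j=0..n. sin (real j * x))^2"
proof (induction n)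
  case 0
  then show ?case by (simp add: SS_def)
next
  case (Suc n)
  let ?A = "\<Sum>j=0..n. cos (real j * x)"
  let ?B = "\<Sum>j=0..n. sin (real j * x)"
  let ?c = "cos (real (Suc n) * x)"
  let ?s = "sin (real (Suc n) * x)"
  have cross: "?A * ?c + ?B * ?s = (\<Sum>k=0..n. cos (real (Suc k) * x))"
  proof -
    have e1: "?A * ?c = (\<Sum>j=0..n. cos (real j * x) * ?c)" by (rule sum_distrib_right)
    have e2: "?B * ?s = (\<Sum>j=0..n. sin (real j * x) * ?s)" by (rule sum_distrib_right)
    have "?A * ?c + ?B * ?s = (\<Sum>j=0..n. cos (real j * x) * ?c + sin (real j * x) * ?s)"
      unfolding e1 e2 sum.distrib ..
    also have "\<dots> = (\<Sum>j=0..n. cos (real (Suc n) * x - real j * x))"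
      by (rule sum.cong) (simp_all add: cos_diff mult.commute)
    also have "\<dots> = (\<Sum>j=0..n. cos ((real (Suc n) - real j) * x))"
      by (simp add: algebra_simps)
    finally show ?thesis using rev_sum by simp
  qed
  have S0: "SS 0 (Suc n) x = 1 + (\<Sum>k=0..n. cos (real (Suc k) * x))"
    unfolding SS_def by (subst sum.atLeast0_atMost_Suc_shift) simp
  have rec: "SS 1 (Suc n) x = SS 1 n x + SS 0 (Suc n) x"
    using SS_rec[of 0 n x] by simp
  have sq: "?c^2 + ?s^2 = 1" by (simp add: sin_cos_squared_add2 add.commute)
  have "(\<Sum>j=0..Suc n. cos (real j * x))^2 + (\<Sum>j=0..Suc n. sin (real j * x))^2
      = (?A + ?c)^2 + (?B + ?s)^2" by simp
  also have "\<dots> = ?A^2 + ?B^2 + 2 * (?A * ?c + ?B * ?s) + (?c^2 + ?s^2)"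
    by (simp add: power2_eq_square algebra_simps)
  finally show ?case using Suc.IH cross S0 rec sq by simp
qed

lemma base1: "n \<ge> 1 \<Longrightarrow> 0 < x \<Longrightarrow> x < pi \<Longrightarrow> SS 1 n x > 1"
proof -
  assume n: "n \<ge> 1" and x: "0 < x" "x < pi"
  show ?thesis
  proof (cases "n = 1")
    case True
    have "cos x > -1"
      using cos_monotone_0_pi[of x pi] x by simp
    then show ?thesis using True by (simp add: SS_def)
  next
    case False
    then have "n \<ge> 2" using n by simp
    moreover have "2 * SS 1 n x - real (Suc n) \<ge> 0" using key[of n x] by simp
    ultimately show ?thesis by simp
  qed
qed

lemma main: "m \<ge> 1 \<Longrightarrow> n \<ge> 1 \<Longrightarrow> 0 < x \<Longrightarrow> x < pi \<Longrightarrow> SS m n x > real m"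
proof (induction m arbitrary: n rule: nat_induct_at_least)
  case base
  then show ?case using base1 by simp
next
  case (Suc m)
  note IHm = Suc.IH
  show ?case using \<open>n \<ge> 1\<close>
  proof (induction n rule: nat_induct_at_least)
    case base
    have "SS (Suc m) 1 x = SS (Suc m) 0 x + SS m 1 x" using SS_rec[of m 0 x] by simp
    then show ?case using IHm[of 1] Suc.prems SS_0[of "Suc m" x] by simp
  next
    case (Suc n)
    have "SS (Suc m) (Suc n) x = SS (Suc m) n x + SS m (Suc n) x" by (rule SS_rec)
    moreover have "SS m (Suc n) x > real m" using Suc.prems \<open>0 < x\<close> \<open>x < pi\<close> by (intro IHm) auto
    ultimately show ?case using Suc.IH \<open>m \<ge> 1\<close> by simp
  qed
qed

theorem theorem1:
  fixes m :: nat
  assumes "m \<ge> 1"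
  shows "(\<forall>n::nat. \<forall>x::real. n \<ge> 1 \<longrightarrow> 0 < x \<longrightarrow> x < pi \<longrightarrow>
            (\<Sum>k=0..n. real ((n - k + m) choose m) * cos (real k * x)) > real m)
       \<and> (\<forall>c::real. c > real m \<longrightarrow>
            (\<exists>n::nat. \<exists>x::real. n \<ge> 1 \<and> 0 < x \<and> x < pi \<and>
              (\<Sum>k=0..n. real ((n - k + m) choose m) * cos (real k * x)) < c))"
proof (intro conjI allI impI)
  fix n :: nat and x :: real
  assume "n \<ge> 1" "0 < x" "x < pi"
  then show "(\<Sum>k=0..n. real ((n - k + m) choose m) * cos (real k * x)) > real m"
    using main[OF assms] unfolding SS_def by blast
next
  fix c :: real assume c: "c > real m"
  define y where "y = (-1 + min (c - real m - 1) 0) / 2"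
  have y1: "-1 < y" "y < 1" "y < c - real m - 1" using c by (auto simp: y_def)
  define x where "x = arccos y"
  have x: "0 < x" "x < pi" "cos x = y" using y1 unfolding x_def
    using arccos_lt_bounded[of y] cos_arccos[of y] by auto
  have "(\<Sum>k=0..1. real ((1 - k + m) choose m) * cos (real k * x)) = real (m+1) + cos x"
    by simp
  then show "\<exists>n::nat. \<exists>x::real. n \<ge> 1 \<and> 0 < x \<and> x < pi \<and>
              (\<Sum>k=0..n. real ((n - k + m) choose m) * cos (real k * x)) < c"
    using x y1 by (intro exI[of _ 1] exI[of _ x]) auto
qed

end
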